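(* For any irrational number $\alpha \in \mathbb{R}\setminus\mathbb{Q}$, there are infinitely many fractions $\frac{P}{4Q}$, with $P$ an odd integer and $Q$ a positive integer, $P$ and $Q$ relatively prime, such that $$\left| \alpha - \frac{P}{4Q} \right| < \frac{1}{4Q^2}.$$ *)

theory Defs
  imports Complex_Main
begin

end

theory Submission
  imports Defs
begin

fun cfx :: "real \<Rightarrow> nat \<Rightarrow> real" where
  "cfx b 0 = b"
| "cfx b (Suc n) = 1 / (cfx b n - of_int \<lfloor>cfx b n\<rfloor>)"

declare cfx.simps(2)[simp del]

definition cfa :: "real \<Rightarrow> nat \<Rightarrow> int" where
  "cfa b n = \<lfloor>cfx b n\<rfloor>"

fun cfP :: "real \<Rightarrow> nat \<Rightarrow> int" where
  "cfP b 0 = 1"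
| "cfP b (Suc 0) = cfa b 0"
| "cfP b (Suc (Suc n)) = cfa b (Suc n) * cfP b (Suc n) + cfP b n"

fun cfQ :: "real \<Rightarrow> nat \<Rightarrow> int" where
  "cfQ b 0 = 0"
| "cfQ b (Suc 0) = 1"
| "cfQ b (Suc (Suc n)) = cfa b (Suc n) * cfQ b (Suc n) + cfQ b n"

lemma cfx_irr: assumes "b \<notin> \<rat>" shows "cfx b n \<notin> \<rat>"
proof (induction n)
  case 0 then show ?case using assms by simp
next
  case (Suc n)
  show ?case
  proof
    assume h: "cfx b (Suc n) \<in> \<rat>"
    have "cfx b n - of_int \<lfloor>cfx b n\<rfloor> = 1 / cfx b (Suc n)" by (simp add: cfx.simps(2))
    also have "\<dots> \<in> \<rat>" using Rats_divide[OF Rats_1 h] by simp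
    finally have "cfx b n - of_int \<lfloor>cfx b n\<rfloor> + of_int \<lfloor>cfx b n\<rfloor> \<in> \<rat>"
      by (intro Rats_add) auto
    then show False using Suc by simp
  qed
qed

lemma frac_pos: assumes "(x::real) \<notin> \<rat>" shows "0 < x - of_int \<lfloor>x\<rfloor>" "x - of_int \<lfloor>x\<rfloor> < 1"
proof -
  have "x \<noteq> of_int \<lfloor>x\<rfloor>" using assms by (metis Rats_of_int)
  then show "0 < x - of_int \<lfloor>x\<rfloor>" using of_int_floor_le[of x] by linarith
  show "x - of_int \<lfloor>x\<rfloor> < 1" by linarith
qed

lemma cfx_gt1: assumes "b \<notin> \<rat>" shows "cfx b (Suc n) > 1"
proof -
  have "0 < cfx b n - of_int \<lfloor>cfx b n\<rfloor>" "cfx b n - of_int \<lfloor>cfx b n\<rfloor> < 1"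
    using frac_pos[OF cfx_irr[OF assms]] by auto
  then show ?thesis by (simp add: less_divide_eq cfx.simps(2))
qed

lemma cfa_ge1: assumes "b \<notin> \<rat>" shows "cfa b (Suc n) \<ge> 1"
  using cfx_gt1[OF assms, of n] unfolding cfa_def by (simp add: le_floor_iff)

lemma cfx_rec: assumes "b \<notin> \<rat>"
  shows "cfx b n = of_int (cfa b n) + 1 / cfx b (Suc n)"
  using frac_pos[OF cfx_irr[OF assms, of n]] by (simp add: cfa_def cfx.simps(2))

lemma cfQ_pos: assumes "b \<notin> \<rat>" shows "cfQ b n \<ge> 0 \<and> cfQ b (Suc n) \<ge> 1"
proof (induction n)
  case 0 then show ?case by simp
next
  case (Suc n)
  have a: "cfa b (Suc n) \<ge> 1" by (rule cfa_ge1[OF assms])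
  have "1 * cfQ b (Suc n) \<le> cfa b (Suc n) * cfQ b (Suc n)"
    by (rule mult_right_mono) (use a Suc in auto)
  then have "cfa b (Suc n) * cfQ b (Suc n) \<ge> cfQ b (Suc n)" by (simp only: mult_1_left)
  moreover have "cfQ b (Suc (Suc n)) = cfa b (Suc n) * cfQ b (Suc n) + cfQ b n" by simp
  ultimately show ?case using Suc by linarith
qed

lemma cfQ_grow: assumes "b \<notin> \<rat>" shows "cfQ b (Suc (Suc n)) \<ge> cfQ b n + 1"
proof -
  have a: "cfa b (Suc n) \<ge> 1" by (rule cfa_ge1[OF assms])
  have q: "cfQ b (Suc n) \<ge> 1" using cfQ_pos[OF assms, of n] by simp
  have "1 * cfQ b (Suc n) \<le> cfa b (Suc n) * cfQ b (Suc n)"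
    by (rule mult_right_mono) (use a q in auto)
  then have "cfa b (Suc n) * cfQ b (Suc n) \<ge> cfQ b (Suc n)" by (simp only: mult_1_left)
  moreover have "cfQ b (Suc (Suc n)) = cfa b (Suc n) * cfQ b (Suc n) + cfQ b n" by simp
  moreover have "cfQ b n \<ge> 0" using cfQ_pos[OF assms, of n] by simp
  ultimately show ?thesis using q by linarith
qed

lemma cfQ_large: assumes "b \<notin> \<rat>" shows "cfQ b (2 * m) \<ge> int m"
proof (induction m)
  case 0 then show ?case by simp
next
  case (Suc m)
  have "2 * Suc m = Suc (Suc (2 * m))" by simp
  then show ?case using cfQ_grow[OF assms, of "2*m"] Suc by simp
qed

lemma cf_det: "cfP b (Suc n) * cfQ b n - cfP b n * cfQ b (Suc n) = (-1) ^ Suc n"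
proof (induction n)
  case 0 then show ?case by simp
next
  case (Suc n)
  then show ?case by (simp add: algebra_simps)
qed

lemma cf_ident: assumes "b \<notin> \<rat>"
  shows "b * (of_int (cfQ b (Suc n)) * cfx b (Suc n) + of_int (cfQ b n))
       = of_int (cfP b (Suc n)) * cfx b (Suc n) + of_int (cfP b n)"
proof (induction n)
  case 0
  have "cfx b 0 = of_int (cfa b 0) + 1 / cfx b 1" using cfx_rec[OF assms, of 0] by simp
  moreover have "cfx b 1 > 1" using cfx_gt1[OF assms, of 0] by simp
  moreover have "b - of_int (cfa b 0) > 0" using frac_pos[OF assms] by (simp add: cfa_def)
  ultimately show ?case by (simp add: field_simps)
next
  case (Suc n)
  define y where "y = cfx b (Suc (Suc n))"
  have y: "y > 1" unfolding y_def by (rule cfx_gt1[OF assms])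
  have r: "cfx b (Suc n) = of_int (cfa b (Suc n)) + 1 / y"
    unfolding y_def by (rule cfx_rec[OF assms])
  have "b * (of_int (cfQ b (Suc n)) * (of_int (cfa b (Suc n)) + 1 / y) + of_int (cfQ b n))
       = of_int (cfP b (Suc n)) * (of_int (cfa b (Suc n)) + 1 / y) + of_int (cfP b n)"
    using Suc r by simp
  then have h: "y * (b * (of_int (cfQ b (Suc n)) * (of_int (cfa b (Suc n)) + 1 / y) + of_int (cfQ b n)))
       = y * (of_int (cfP b (Suc n)) * (of_int (cfa b (Suc n)) + 1 / y) + of_int (cfP b n))"
    by simp
  have e1: "y * (b * (of_int (cfQ b (Suc n)) * (of_int (cfa b (Suc n)) + 1 / y) + of_int (cfQ b n)))
      = b * (of_int (cfQ b (Suc (Suc n))) * y + of_int (cfQ b (Suc n)))"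
    using y by (simp add: field_simps)
  have e2: "y * (of_int (cfP b (Suc n)) * (of_int (cfa b (Suc n)) + 1 / y) + of_int (cfP b n))
      = of_int (cfP b (Suc (Suc n))) * y + of_int (cfP b (Suc n))"
    using y by (simp add: field_simps)
  from h have "b * (of_int (cfQ b (Suc (Suc n))) * y + of_int (cfQ b (Suc n)))
      = of_int (cfP b (Suc (Suc n))) * y + of_int (cfP b (Suc n))" by (simp only: e1 e2)
  then show ?case by (simp only: y_def)
qed

lemma cf_approx: assumes "b \<notin> \<rat>"
  shows "\<bar>b - of_int (cfP b (Suc n)) / of_int (cfQ b (Suc n))\<bar> < 1 / (of_int (cfQ b (Suc n)))\<^sup>2"
proof -
  define y where "y = cfx b (Suc n)"
  define Q' where "Q' = (of_int (cfQ b (Suc n)) :: real)"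
  define Q where "Q = (of_int (cfQ b n) :: real)"
  define P' where "P' = (of_int (cfP b (Suc n)) :: real)"
  define P where "P = (of_int (cfP b n) :: real)"
  have y: "y > 1" unfolding y_def by (rule cfx_gt1[OF assms])
  have Q: "Q \<ge> 0" "Q' \<ge> 1" using cfQ_pos[OF assms, of n] unfolding Q_def Q'_def by auto
  have id: "b * (Q' * y + Q) = P' * y + P" using cf_ident[OF assms, of n]
    unfolding y_def Q_def Q'_def P_def P'_def by simp
  have d: "P' * Q - P * Q' = (-1) ^ Suc n" unfolding P_def P'_def Q_def Q'_def
    using arg_cong[OF cf_det[of b n], of "of_int :: int \<Rightarrow> real"] by simp
  have "(b * Q' - P') * (Q' * y + Q) = Q' * (b * (Q' * y + Q)) - P' * (Q' * y + Q)"
    by (simp add: algebra_simps)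
  also have "\<dots> = -(P' * Q - P * Q')" unfolding id by (simp add: algebra_simps)
  finally have e0: "(b * Q' - P') * (Q' * y + Q) = -((-1) ^ Suc n)" using d by simp
  have yq: "Q' * 1 < Q' * y" by (rule mult_strict_left_mono) (use y Q in auto)
  have pos: "Q' * y + Q > 0" using Q yq by linarith
  have e: "\<bar>b * Q' - P'\<bar> * (Q' * y + Q) = 1"
    using arg_cong[OF e0, of abs] pos by (simp add: abs_mult)
  have gt: "Q' * y + Q > Q'" using Q yq by linarith
  have "\<bar>b * Q' - P'\<bar> = 1 / (Q' * y + Q)" using e gt Q
    by (simp add: eq_divide_eq)
  also have "\<dots> < 1 / Q'" using gt Q by (simp add: frac_less2)
  finally have "\<bar>b * Q' - P'\<bar> < 1 / Q'" .
  moreover have "b - P' / Q' = (b * Q' - P') / Q'" using Q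
    by (simp add: diff_divide_distrib)
  then have "\<bar>b - P' / Q'\<bar> = \<bar>b * Q' - P'\<bar> / Q'" using Q
    by (simp add: abs_divide)
  ultimately have "\<bar>b - P' / Q'\<bar> < (1 / Q') / Q'" using Q divide_strict_right_mono[of _ "1/Q'" Q'] by simp
  then show ?thesis unfolding Q'_def P'_def by (simp add: power2_eq_square)
qed

lemma cfQ_mono: assumes "b \<notin> \<rat>" shows "cfQ b n \<le> cfQ b (Suc n)"
proof (cases n)
  case 0 then show ?thesis by simp
next
  case (Suc m)
  have a: "cfa b (Suc m) \<ge> 1" by (rule cfa_ge1[OF assms])
  have q: "cfQ b (Suc m) \<ge> 1" "cfQ b m \<ge> 0" using cfQ_pos[OF assms, of m] by auto
  have "1 * cfQ b (Suc m) \<le> cfa b (Suc m) * cfQ b (Suc m)"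
    by (rule mult_right_mono) (use a q in auto)
  then have h: "cfQ b (Suc m) \<le> cfa b (Suc m) * cfQ b (Suc m)" by (simp only: mult_1_left)
  have "cfQ b (Suc (Suc m)) = cfa b (Suc m) * cfQ b (Suc m) + cfQ b m" by simp
  then show ?thesis unfolding Suc using h q by linarith
qed

lemma cf_coprime: "coprime (cfP b (Suc m)) (cfQ b (Suc m))"
proof (rule coprimeI)
  fix c assume "c dvd cfP b (Suc m)" "c dvd cfQ b (Suc m)"
  then have "c dvd cfP b (Suc m) * cfQ b m - cfP b m * cfQ b (Suc m)" by auto
  then have "c dvd (-1) ^ Suc m" by (simp only: cf_det)
  moreover have "is_unit ((-1::int) ^ Suc m)" by simp
  ultimately show "is_unit c" by (rule dvd_unit_imp_unit)
qed

lemma cf_odd: "odd (cfP b (Suc m)) \<or> odd (cfP b m)"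
proof (rule ccontr)
  assume "\<not> ?thesis"
  then have "2 dvd cfP b (Suc m) * cfQ b m - cfP b m * cfQ b (Suc m)" by auto
  then have "(2::int) dvd (-1) ^ Suc m" by (simp only: cf_det)
  then show False by simp
qed

lemma cf_good: fixes b :: real assumes "b \<notin> \<rat>"
  shows "cfQ b (Suc k) > 0 \<and> coprime (cfP b (Suc k)) (cfQ b (Suc k)) \<and>
     \<bar>b - of_int (cfP b (Suc k)) / of_int (cfQ b (Suc k))\<bar> < 1 / (of_int (cfQ b (Suc k)))\<^sup>2"
proof -
  have "cfQ b (Suc k) > 0" using cfQ_pos[OF assms, of k] by simp
  then show ?thesis using cf_coprime[of b k] cf_approx[OF assms, of k] by blast
qed

lemma good_approx: fixes b :: real assumes "b \<notin> \<rat>"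
  shows "\<exists>P Q. odd P \<and> Q > 0 \<and> coprime P Q \<and> Q \<ge> int M \<and>
     \<bar>b - of_int P / of_int Q\<bar> < 1 / (of_int Q)\<^sup>2"
proof -
  have qn: "cfQ b (Suc (2 * M)) \<ge> int M"
    using cfQ_large[OF assms, of M] cfQ_mono[OF assms, of "2*M"] by linarith
  have qn1: "cfQ b (Suc (Suc (2 * M))) \<ge> int M" using qn cfQ_mono[OF assms, of "Suc (2*M)"] by linarith
  show ?thesis
  proof (cases "odd (cfP b (Suc (Suc (2 * M))))")
    case True then show ?thesis using cf_good[OF assms, of "Suc (2*M)"] qn1 by blast
  next
    case False
    then have "odd (cfP b (Suc (2 * M)))" using cf_odd[of b "Suc (2*M)"] by blast
    then show ?thesis using cf_good[OF assms, of "2*M"] qn by blast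
  qed
qed

theorem corollary1:
  fixes \<alpha> :: real
  assumes "\<alpha> \<notin> \<rat>"
  shows "infinite {real_of_int P / (4 * real_of_int Q) | P Q :: int.
            odd P \<and> Q > 0 \<and> coprime P Q \<and>
            \<bar>\<alpha> - real_of_int P / (4 * real_of_int Q)\<bar> < 1 / (4 * (real_of_int Q)\<^sup>2)}"
    (is "infinite ?S")
proof
  assume fin: "finite ?S"
  have b: "4 * \<alpha> \<notin> \<rat>"
  proof
    assume "4 * \<alpha> \<in> \<rat>"
    then have "(4 * \<alpha>) / 4 \<in> \<rat>" by (intro Rats_divide) auto
    then show False using assms by simp
  qed
  have near: "\<exists>v\<in>?S. \<bar>\<alpha> - v\<bar> < 1 / real M" if M: "M > 0" for M :: nat
  proof -
    obtain P Q where PQ: "odd P" "Q > 0" "coprime P Q" "Q \<ge> int M"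
      "\<bar>4 * \<alpha> - of_int P / of_int Q\<bar> < 1 / (of_int Q)\<^sup>2"
      using good_approx[OF b, of M] by blast
    have Qr: "real_of_int Q \<ge> real M" "real_of_int Q \<ge> 1"
    proof -
      have "real_of_int Q \<ge> real_of_int (int M)" using PQ(4) by (simp only: of_int_le_iff)
      then show "real_of_int Q \<ge> real M" by simp
      have "Q \<ge> 1" using PQ(2) by simp
      then show "real_of_int Q \<ge> 1" by simp
    qed
    have eq: "\<alpha> - of_int P / (4 * of_int Q) = (4 * \<alpha> - of_int P / of_int Q) / 4"
      using Qr by (simp add: field_simps)
    have c: "\<bar>\<alpha> - of_int P / (4 * of_int Q)\<bar> < 1 / (4 * (of_int Q)\<^sup>2)"
      unfolding eq using PQ(5) by simp
    have "1 / (4 * (real_of_int Q)\<^sup>2) \<le> 1 / real_of_int Q"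
    proof (rule divide_left_mono)
      have "real_of_int Q * 1 \<le> real_of_int Q * real_of_int Q"
        using Qr by (intro mult_left_mono) auto
      then show "real_of_int Q \<le> 4 * (real_of_int Q)\<^sup>2" unfolding power2_eq_square using Qr by linarith
    qed (use Qr in auto)
    also have "\<dots> \<le> 1 / real M" using Qr M by (intro divide_left_mono) auto
    finally have "\<bar>\<alpha> - of_int P / (4 * of_int Q)\<bar> < 1 / real M" using c by linarith
    moreover have "of_int P / (4 * of_int Q) \<in> ?S"
      unfolding mem_Collect_eq
      by (rule exI[of _ P], rule exI[of _ Q]) (use PQ c in simp)
    ultimately show ?thesis by blast
  qed
  have ne: "?S \<noteq> {}" using near[of 1] by auto
  define D where "D = (\<lambda>v. \<bar>\<alpha> - v\<bar>) ` ?S"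
  have Dfin: "finite D" "D \<noteq> {}" unfolding D_def using fin ne by auto
  have Dpos: "\<forall>d\<in>D. d > 0"
  proof
    fix d assume "d \<in> D"
    then obtain v where "v \<in> ?S" and dv: "d = \<bar>\<alpha> - v\<bar>" unfolding D_def by (rule imageE)
    then obtain P Q :: int where "v = of_int P / (4 * of_int Q)" unfolding mem_Collect_eq by (elim exE conjE)
    then have d: "d = \<bar>\<alpha> - of_int P / (4 * of_int Q)\<bar>" using dv by simp
    have "of_int P / (4 * of_int Q) \<in> (\<rat>::real set)" by (intro Rats_divide Rats_mult) auto
    then have "\<alpha> \<noteq> of_int P / (4 * of_int Q)" using assms by auto
    then show "d > 0" using d by simp
  qed
  define \<delta> where "\<delta> = Min D"
  have dp: "\<delta> > 0" unfolding \<delta>_def using Dfin Dpos by simp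
  obtain M :: nat where M: "M > 0" "inverse (real M) < \<delta>"
    using ex_inverse_of_nat_less[OF dp] by blast
  obtain v where v: "v \<in> ?S" "\<bar>\<alpha> - v\<bar> < 1 / real M" using near[OF M(1)] by blast
  have "\<bar>\<alpha> - v\<bar> \<in> D" unfolding D_def using v(1) by blast
  then have "\<delta> \<le> \<bar>\<alpha> - v\<bar>" unfolding \<delta>_def using Dfin by simp
  then show False using v(2) M(2) by (simp add: inverse_eq_divide)
qed

end
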